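(* Let $A>0$, $\phi>0$, $0<\gamma<1$, and $\alpha,\beta>0$ with $\alpha+\beta<1$. Consider the map $F_S:(0,\infty)^2\to(0,\infty)^2$, $$F_S(k,N)=\left(A\left[\left(\frac{\alpha}{1-\alpha}\right)\phi\, k^{2}N^{\gamma}\right]^{\alpha}k^{\beta},\ \left(\frac{1-\alpha}{2\phi k}\right)N^{1-\gamma}\right),$$ which defines the dynamical system $(k_{t+1},N_{t+1})=F_S(k_t,N_t)$. Then $F_S$ has a unique fixed point $(\bar k_S,\bar N_S)$ with $\bar k_S>0$, $\bar N_S>0$, and it is given by $$\bar k_S=\left(A^{1/\alpha}\frac{\alpha}{2}\right)^{\frac{\alpha}{1-\beta-\alpha}},\qquad \bar N_S=A^{\frac{-1}{(1-\beta-\alpha)\gamma}}\left(\frac{1-\alpha}{2\phi}\right)^{\frac{1-\beta-2\alpha}{(1-\beta-\alpha)\gamma}}\left[\left(\frac{\alpha}{1-\alpha}\right)\phi\right]^{\frac{-\alpha}{(1-\beta-\alpha)\gamma}}.$$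
   Context: This is an overlapping-generations model in which $k_t$ is human capital per adult and $N_t$ the adult population at generation $t$, in the case where the father's and mother's childcare times are perfect substitutes. Households' optimal fertility and education spending are $n^*(k,N)=\frac{1-\alpha}{2\phi kN^{\gamma}}$ and $e^*(k,N)=\frac{\alpha}{1-\alpha}\phi k^2N^{\gamma}$, and the dynamics are $k_{t+1}=A\,e^*(k_t,N_t)^{\alpha}k_t^{\beta}$, $N_{t+1}=n^*(k_t,N_t)N_t$, which is the map $F_S$ above. An "economically meaningful" equilibrium is a fixed point with both coordinates strictly positive. *)

theory Defs
  imports Complex_Main
begin

definition F_S :: "real \<Rightarrow> real \<Rightarrow> real \<Rightarrow> real \<Rightarrow> real \<Rightarrow> real \<times> real \<Rightarrow> real \<times> real" where
  "F_S A \<phi> \<gamma> \<alpha> \<beta> = (\<lambda>(k, N).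
     (A * ((\<alpha> / (1 - \<alpha>)) * \<phi> * k^2 * N powr \<gamma>) powr \<alpha> * k powr \<beta>,
      ((1 - \<alpha>) / (2 * \<phi> * k)) * N powr (1 - \<gamma>)))"

end

theory Submission
  imports Defs
begin

lemma aux: "(-1 / (d::real)) * a + (b / d) * c + (- e / d) * f = (- a + b * c - e * f) / d"
  by (cases "d = 0") (simp_all add: field_simps)

lemma aux2: "(D::real) \<noteq> 0 \<Longrightarrow> (D * c - Q) / (D * g) = (c - Q / D) / g"
  by (simp add: field_simps)

lemma key:
  fixes A \<phi> \<gamma> \<alpha> \<beta> k N :: real
  assumes "A > 0" "\<phi> > 0" "0 < \<gamma>" "\<gamma> < 1" "\<alpha> > 0" "\<beta> > 0" "\<alpha> + \<beta> < 1"
    and k: "k > 0" and N: "N > 0"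
  shows "F_S A \<phi> \<gamma> \<alpha> \<beta> (k, N) = (k, N) \<longleftrightarrow>
    (ln k = (ln A + \<alpha> * (ln \<alpha> - ln 2)) / (1 - \<beta> - \<alpha>) \<and>
     ln N = (ln (1 - \<alpha>) - ln 2 - ln \<phi> - (ln A + \<alpha> * (ln \<alpha> - ln 2)) / (1 - \<beta> - \<alpha>)) / \<gamma>)"
proof -
  have a1: "1 - \<alpha> > 0" using assms by linarith
  have D: "1 - \<beta> - \<alpha> > 0" using assms by linarith
  define B where "B = (\<alpha> / (1 - \<alpha>)) * \<phi> * k^2 * N powr \<gamma>"
  have Bp: "B > 0" unfolding B_def using assms a1 k N by simp
  have lnB: "ln B = ln \<alpha> - ln (1 - \<alpha>) + ln \<phi> + 2 * ln k + \<gamma> * ln N"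
    unfolding B_def using assms a1 k N
    by (simp add: ln_mult ln_div ln_powr ln_realpow)
  have p1: "A * B powr \<alpha> * k powr \<beta> > 0" using Bp assms k by simp
  have p2: "((1 - \<alpha>) / (2 * \<phi> * k)) * N powr (1 - \<gamma>) > 0" using a1 assms k N by simp
  have e1: "(A * B powr \<alpha> * k powr \<beta> = k) \<longleftrightarrow>
      ln A + \<alpha> * ln B + \<beta> * ln k = ln k"
  proof -
    have "(A * B powr \<alpha> * k powr \<beta> = k) \<longleftrightarrow> ln (A * B powr \<alpha> * k powr \<beta>) = ln k"
      using p1 k by simp
    also have "ln (A * B powr \<alpha> * k powr \<beta>) = ln A + \<alpha> * ln B + \<beta> * ln k"
      using assms Bp k by (simp add: ln_mult ln_powr)
    finally show ?thesis .
  qed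
  have e2: "(((1 - \<alpha>) / (2 * \<phi> * k)) * N powr (1 - \<gamma>) = N) \<longleftrightarrow>
      ln (1 - \<alpha>) - ln 2 - ln \<phi> - ln k + (1 - \<gamma>) * ln N = ln N"
  proof -
    have "(((1 - \<alpha>) / (2 * \<phi> * k)) * N powr (1 - \<gamma>) = N) \<longleftrightarrow>
       ln (((1 - \<alpha>) / (2 * \<phi> * k)) * N powr (1 - \<gamma>)) = ln N"
      using p2 N by simp
    also have "ln (((1 - \<alpha>) / (2 * \<phi> * k)) * N powr (1 - \<gamma>)) =
        ln (1 - \<alpha>) - ln 2 - ln \<phi> - ln k + (1 - \<gamma>) * ln N"
      using assms a1 k N by (simp add: ln_mult ln_div ln_powr)
    finally show ?thesis .
  qed
  have F: "F_S A \<phi> \<gamma> \<alpha> \<beta> (k, N) = (A * B powr \<alpha> * k powr \<beta>, ((1 - \<alpha>) / (2 * \<phi> * k)) * N powr (1 - \<gamma>))"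
    unfolding F_S_def B_def by simp
  define x where "x = ln k"
  define y where "y = ln N"
  define X where "X = (ln A + \<alpha> * (ln \<alpha> - ln 2)) / (1 - \<beta> - \<alpha>)"
  have lin: "(ln A + \<alpha> * (ln \<alpha> - ln (1 - \<alpha>) + ln \<phi> + 2 * x + \<gamma> * y) + \<beta> * x = x \<and>
        ln (1 - \<alpha>) - ln 2 - ln \<phi> - x + (1 - \<gamma>) * y = y) \<longleftrightarrow>
      (x = X \<and> y = (ln (1 - \<alpha>) - ln 2 - ln \<phi> - X) / \<gamma>)"
  proof
    assume h: "ln A + \<alpha> * (ln \<alpha> - ln (1 - \<alpha>) + ln \<phi> + 2 * x + \<gamma> * y) + \<beta> * x = x \<and>
        ln (1 - \<alpha>) - ln 2 - ln \<phi> - x + (1 - \<gamma>) * y = y"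
    then have gy: "\<gamma> * y = ln (1 - \<alpha>) - ln 2 - ln \<phi> - x" by (simp add: algebra_simps)
    with h have "ln A + \<alpha> * (ln \<alpha> - ln 2 + x) + \<beta> * x = x" by (simp add: algebra_simps)
    then have "(1 - \<beta> - \<alpha>) * x = ln A + \<alpha> * (ln \<alpha> - ln 2)" by (simp add: algebra_simps)
    then have xX: "x = X" unfolding X_def using D by (simp add: field_simps)
    moreover have "y = (ln (1 - \<alpha>) - ln 2 - ln \<phi> - X) / \<gamma>" using gy xX assms
      by (simp add: field_simps)
    ultimately show "x = X \<and> y = (ln (1 - \<alpha>) - ln 2 - ln \<phi> - X) / \<gamma>" by simp
  next
    assume h: "x = X \<and> y = (ln (1 - \<alpha>) - ln 2 - ln \<phi> - X) / \<gamma>"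
    then have gy: "\<gamma> * y = ln (1 - \<alpha>) - ln 2 - ln \<phi> - x" using assms by (simp add: field_simps)
    have "(1 - \<beta> - \<alpha>) * x = ln A + \<alpha> * (ln \<alpha> - ln 2)" using h D unfolding X_def by simp
    then have h1: "ln A + \<alpha> * (ln \<alpha> - ln 2 + x) + \<beta> * x = x" by (simp add: algebra_simps)
    have z: "\<gamma> * y - (ln (1 - \<alpha>) - ln 2 - ln \<phi> - x) = 0" using gy by simp
    have eq: "ln A + \<alpha> * (ln \<alpha> - ln (1 - \<alpha>) + ln \<phi> + 2 * x + \<gamma> * y) + \<beta> * x
       = ln A + \<alpha> * (ln \<alpha> - ln 2 + x) + \<beta> * x + \<alpha> * (\<gamma> * y - (ln (1 - \<alpha>) - ln 2 - ln \<phi> - x))"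
      by (simp add: algebra_simps)
    have c1: "ln A + \<alpha> * (ln \<alpha> - ln (1 - \<alpha>) + ln \<phi> + 2 * x + \<gamma> * y) + \<beta> * x = x"
      unfolding eq z using h1 by simp
    have c2: "ln (1 - \<alpha>) - ln 2 - ln \<phi> - x + (1 - \<gamma>) * y = y" using gy by (simp add: algebra_simps)
    show "ln A + \<alpha> * (ln \<alpha> - ln (1 - \<alpha>) + ln \<phi> + 2 * x + \<gamma> * y) + \<beta> * x = x \<and>
        ln (1 - \<alpha>) - ln 2 - ln \<phi> - x + (1 - \<gamma>) * y = y" using c1 c2 by simp
  qed
  show ?thesis unfolding F using e1 e2 lin lnB unfolding x_def y_def X_def by simp
qed

theorem proposition1:
  fixes A \<phi> \<gamma> \<alpha> \<beta> :: real
  assumes "A > 0" "\<phi> > 0" "0 < \<gamma>" "\<gamma> < 1" "\<alpha> > 0" "\<beta> > 0" "\<alpha> + \<beta> < 1"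
  shows "{p :: real \<times> real. fst p > 0 \<and> snd p > 0 \<and> F_S A \<phi> \<gamma> \<alpha> \<beta> p = p} =
         {((A powr (1 / \<alpha>) * (\<alpha> / 2)) powr (\<alpha> / (1 - \<beta> - \<alpha>)),
           A powr (-1 / ((1 - \<beta> - \<alpha>) * \<gamma>))
             * ((1 - \<alpha>) / (2 * \<phi>)) powr ((1 - \<beta> - 2 * \<alpha>) / ((1 - \<beta> - \<alpha>) * \<gamma>))
             * ((\<alpha> / (1 - \<alpha>)) * \<phi>) powr (- \<alpha> / ((1 - \<beta> - \<alpha>) * \<gamma>)))}"
  (is "?L = {(?k, ?N)}")
proof -
  have a1: "1 - \<alpha> > 0" using assms by linarith
  have D: "1 - \<beta> - \<alpha> > 0" using assms by linarith
  define X where "X = (ln A + \<alpha> * (ln \<alpha> - ln 2)) / (1 - \<beta> - \<alpha>)"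
  define Y where "Y = (ln (1 - \<alpha>) - ln 2 - ln \<phi> - X) / \<gamma>"
  have kp: "?k > 0" using assms by simp
  have Np: "?N > 0" using assms a1 by simp
  have lk: "ln ?k = X"
  proof -
    have "ln ?k = (\<alpha> / (1 - \<beta> - \<alpha>)) * ((1 / \<alpha>) * ln A + ln \<alpha> - ln 2)"
      using assms by (simp add: ln_powr ln_mult ln_div)
    also have "\<dots> = (\<alpha> * ((1 / \<alpha>) * ln A + ln \<alpha> - ln 2)) / (1 - \<beta> - \<alpha>)" by simp
    also have "\<alpha> * ((1 / \<alpha>) * ln A + ln \<alpha> - ln 2) = ln A + \<alpha> * (ln \<alpha> - ln 2)"
      using assms by (simp add: algebra_simps)
    also have "(ln A + \<alpha> * (ln \<alpha> - ln 2)) / (1 - \<beta> - \<alpha>) = X" unfolding X_def ..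
    finally show ?thesis .
  qed
  have lN: "ln ?N = Y"
  proof -
    have "ln ?N = (-1 / ((1 - \<beta> - \<alpha>) * \<gamma>)) * ln A
       + ((1 - \<beta> - 2 * \<alpha>) / ((1 - \<beta> - \<alpha>) * \<gamma>)) * (ln (1 - \<alpha>) - ln 2 - ln \<phi>)
       + (- \<alpha> / ((1 - \<beta> - \<alpha>) * \<gamma>)) * (ln \<alpha> - ln (1 - \<alpha>) + ln \<phi>)"
      using assms a1 by (simp add: ln_powr ln_mult ln_div) (simp add: algebra_simps diff_divide_distrib add_divide_distrib)
    also have "\<dots> = (- ln A + (1 - \<beta> - 2 * \<alpha>) * (ln (1 - \<alpha>) - ln 2 - ln \<phi>)
        - \<alpha> * (ln \<alpha> - ln (1 - \<alpha>) + ln \<phi>)) / ((1 - \<beta> - \<alpha>) * \<gamma>)"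
      by (rule aux)
    also have "\<dots> = ((1 - \<beta> - \<alpha>) * (ln (1 - \<alpha>) - ln 2 - ln \<phi>) - (ln A + \<alpha> * (ln \<alpha> - ln 2)))
        / ((1 - \<beta> - \<alpha>) * \<gamma>)"
    proof -
      have "- ln A + (1 - \<beta> - 2 * \<alpha>) * (ln (1 - \<alpha>) - ln 2 - ln \<phi>)
        - \<alpha> * (ln \<alpha> - ln (1 - \<alpha>) + ln \<phi>) = (1 - \<beta> - \<alpha>) * (ln (1 - \<alpha>) - ln 2 - ln \<phi>) - (ln A + \<alpha> * (ln \<alpha> - ln 2))"
        by (simp add: algebra_simps)
      then show ?thesis by (simp only:)
    qed
    also have "\<dots> = Y" unfolding Y_def X_def using D by (intro aux2) simp
    finally show ?thesis .
  qed
  show ?thesis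
  proof (intro set_eqI iffI)
    fix p assume "p \<in> ?L"
    then obtain k N where p: "p = (k, N)" and k: "k > 0" and N: "N > 0"
      and fp: "F_S A \<phi> \<gamma> \<alpha> \<beta> (k, N) = (k, N)" by (cases p) auto
    from key[OF assms k N] fp have "ln k = X" "ln N = Y" unfolding X_def Y_def by auto
    then have e: "ln k = ln ?k" "ln N = ln ?N" using lk lN by simp_all
    have "k = ?k" using ln_inj_iff[OF k kp] e(1) by blast
    moreover have "N = ?N" using ln_inj_iff[OF N Np] e(2) by blast
    ultimately
    show "p \<in> {(?k, ?N)}" using p by simp
  next
    fix p assume "p \<in> {(?k, ?N)}"
    then have p: "p = (?k, ?N)" by simp
    have "F_S A \<phi> \<gamma> \<alpha> \<beta> (?k, ?N) = (?k, ?N)"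
      using key[OF assms kp Np] lk lN unfolding X_def Y_def by simp
    then show "p \<in> ?L" using p kp Np by simp
  qed
qed

end
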